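(* Let $v\in C_q(\mathcal D,\widetilde M)$ satisfy $2v_t=\mathrm{i}(v_{xx}-2vv^*v)$ on $\mathcal D$. Then for every $r\ge0$ the mixed derivatives satisfy $\big(\partial_x^k v\big)_{xt}=\big(\partial_x^k v\big)_{tx}$ for $0\le k\le r$ on a square $\{0\le x,t\le\varepsilon\}$ (some $\varepsilon>0$), and all functions $\big(\partial_x^k v\big)(0,t)$ (for $t$ in a neighbourhood $[0,\varepsilon]$ of $0$) and in particular all the numbers $\big(\partial_x^k v\big)(0,0)$, $k\ge0$, are uniquely determined by the boundary values $v(0,t)$ and $v_x(0,t)$, $0\le t<a$. Consequently $v(x,0)$, $x\ge0$, is uniquely determined by $v(0,\cdot)$ and $v_x(0,\cdot)$.
   Context: $\mathcal D=\{(x,t):0\le x<\infty,\ 0\le t<a\}$, $0<a\le\infty$. For constants $\widetilde M_k>0$, $C(\{\widetilde M_k\})$ is the class of infinitely differentiable functions $f$ on $[0,\infty)$ with $|f^{(k)}(x)|\le a(f)^{k+1}\widetilde M_k$ for all $x\ge0$, $k\ge0$, for some $a(f)\ge0$; it is quasi-analytic if, for its elements, vanishing of all derivatives at one point $x\ge0$ forces $f\equiv0$. $C_q(\mathcal D,\widetilde M)$, $\widetilde M=\{\widetilde M_k(i,j)\}$, is the class of $m_1\times m_2$ matrix functions $v$ that are continuously differentiable on $\mathcal D$, have $v_{xx}$ existing, satisfy $\sup_{x>0,\,0\le s\le t}\|v(x,s)\|<\infty$ for each $t<a$, whose entries $v_{ij}(x,0)$ lie in quasi-analytic classes $C(\{\widetilde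 M_k(i,j)\}_k)$, and such that for each $k$ there is $\varepsilon_k>0$ with $v$ $k$ times continuously differentiable in $x$ on $\{0\le x\le\varepsilon_k,\ 0\le t\le\varepsilon_k\}\subset\mathcal D$. Boundary derivatives are one-sided. *)

theory Defs
  imports "HOL-Analysis.Analysis"
begin

type_synonym ('n,'m) cmat = "complex ^ 'n ^ 'm"   (* m x n complex matrices *)

definition dom_D :: "ereal \<Rightarrow> (real \<times> real) set" where
  "dom_D a = {(x,t). 0 \<le> x \<and> 0 \<le> t \<and> ereal t < a}"

definition square :: "real \<Rightarrow> (real \<times> real) set" where
  "square e = {(x,t). 0 \<le> x \<and> x \<le> e \<and> 0 \<le> t \<and> t \<le> e}"

definition has_pdx :: "(real \<times> real \<Rightarrow> 'b::real_normed_vector) \<Rightarrow> real \<times> real \<Rightarrow> 'b \<Rightarrow> bool" where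
  "has_pdx u p d \<longleftrightarrow> ((\<lambda>y. u (y, snd p)) has_vector_derivative d) (at (fst p) within {0..})"

definition pdx :: "(real \<times> real \<Rightarrow> 'b::real_normed_vector) \<Rightarrow> real \<times> real \<Rightarrow> 'b" where
  "pdx u p = vector_derivative (\<lambda>y. u (y, snd p)) (at (fst p) within {0..})"

definition has_pdt :: "ereal \<Rightarrow> (real \<times> real \<Rightarrow> 'b::real_normed_vector) \<Rightarrow> real \<times> real \<Rightarrow> 'b \<Rightarrow> bool" where
  "has_pdt a u p d \<longleftrightarrow>
     ((\<lambda>s. u (fst p, s)) has_vector_derivative d) (at (snd p) within {s. 0 \<le> s \<and> ereal s < a})"

definition pdt :: "ereal \<Rightarrow> (real \<times> real \<Rightarrow> 'b::real_normed_vector) \<Rightarrow> real \<times> real \<Rightarrow> 'b" where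
  "pdt a u p = vector_derivative (\<lambda>s. u (fst p, s)) (at (snd p) within {s. 0 \<le> s \<and> ereal s < a})"

definition mstar :: "complex ^ 'n ^ 'm \<Rightarrow> complex ^ 'm ^ 'n" where
  "mstar A = (\<chi> i j. cnj (A $ j $ i))"

definition cscale :: "complex \<Rightarrow> complex ^ 'n ^ 'm \<Rightarrow> complex ^ 'n ^ 'm" where
  "cscale c A = (\<chi> i j. c * (A $ i $ j))"

definition inf_diff_seq :: "(real \<Rightarrow> complex) \<Rightarrow> (nat \<Rightarrow> real \<Rightarrow> complex) \<Rightarrow> bool" where
  "inf_diff_seq f fd \<longleftrightarrow> (\<forall>x\<ge>0. fd 0 x = f x) \<and>
     (\<forall>k. \<forall>x\<ge>0. (fd k has_vector_derivative fd (Suc k) x) (at x within {0..}))"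

definition DClass :: "(nat \<Rightarrow> real) \<Rightarrow> (real \<Rightarrow> complex) set" where
  "DClass M = {f. \<exists>fd. inf_diff_seq f fd \<and>
       (\<exists>A\<ge>0. \<forall>k. \<forall>x\<ge>0. norm (fd k x) \<le> A ^ Suc k * M k)}"

definition quasi_analytic :: "(nat \<Rightarrow> real) \<Rightarrow> bool" where
  "quasi_analytic M \<longleftrightarrow> (\<forall>f\<in>DClass M. \<forall>fd. inf_diff_seq f fd \<longrightarrow>
      (\<forall>x0\<ge>0. (\<forall>k. fd k x0 = 0) \<longrightarrow> (\<forall>x\<ge>0. f x = 0)))"

text \<open>The class C_q(D, M): M i j k is the constant M_k(i,j).\<close>
definition Cq :: "ereal \<Rightarrow> ('m \<Rightarrow> 'n \<Rightarrow> nat \<Rightarrow> real) \<Rightarrow> (real \<times> real \<Rightarrow> complex ^ 'n ^ 'm) \<Rightarrow> bool" where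
  "Cq a M v \<longleftrightarrow>
     (\<comment> \<open>continuously differentiable on D\<close>
      (\<forall>p\<in>dom_D a. has_pdx v p (pdx v p) \<and> has_pdt a v p (pdt a v p)) \<and>
      continuous_on (dom_D a) v \<and> continuous_on (dom_D a) (pdx v) \<and>
      continuous_on (dom_D a) (pdt a v) \<and>
      \<comment> \<open>v_xx exists\<close>
      (\<forall>p\<in>dom_D a. has_pdx (pdx v) p (pdx (pdx v) p)) \<and>
      \<comment> \<open>boundedness in x on strips\<close>
      (\<forall>t. 0 \<le> t \<and> ereal t < a \<longrightarrow>
         (\<exists>B. \<forall>x s. 0 < x \<longrightarrow> 0 \<le> s \<longrightarrow> s \<le> t \<longrightarrow> norm (v (x, s)) \<le> B)) \<and>
      \<comment> \<open>initial entries in quasi-analytic classes\<close>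
      (\<forall>i j. (\<forall>k. M i j k > 0) \<and> quasi_analytic (M i j) \<and>
             (\<lambda>x. v (x, 0) $ i $ j) \<in> DClass (M i j)) \<and>
      \<comment> \<open>k times continuously differentiable in x near the corner\<close>
      (\<forall>k. \<exists>e>0. ereal e < a \<and>
         (\<forall>j<k. \<forall>p\<in>square e. has_pdx ((pdx ^^ j) v) p (pdx ((pdx ^^ j) v) p)) \<and>
         (\<forall>j\<le>k. continuous_on (square e) ((pdx ^^ j) v))))"

definition solves_NLS :: "ereal \<Rightarrow> (real \<times> real \<Rightarrow> complex ^ 'n ^ 'm) \<Rightarrow> bool" where
  "solves_NLS a v \<longleftrightarrow> (\<forall>p\<in>dom_D a.
     2 *\<^sub>R pdt a v p = cscale \<i> (pdx (pdx v) p - 2 *\<^sub>R (v p ** mstar (v p) ** v p)))"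

end

theory Submission
  imports Defs
begin


definition QQ :: "real \<Rightarrow> (real \<times> real) set" where
  "QQ E = {0..<E} \<times> {0..E}"

lemma at_eq_half: "0 \<le> (x::real) \<Longrightarrow> x < E \<Longrightarrow> at x within {0..} = at x within {0..<E}"
  by (rule at_within_nhd[where S="{x-1<..<E}"]) auto

lemma vd_cong:
  assumes "x \<in> S" "\<And>y. y \<in> S \<Longrightarrow> f y = g y"
  shows "vector_derivative f (at x within S) = vector_derivative g (at x within S)"
proof -
  have "(f has_vector_derivative d) (at x within S) \<longleftrightarrow> (g has_vector_derivative d) (at x within S)" for d
    using has_vector_derivative_transform[OF assms(1), of g f d] 
      has_vector_derivative_transform[OF assms(1), of f g d] assms(2) by auto
  then show ?thesis unfolding vector_derivative_def by simp
qed

lemma loc_pdx: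
  assumes "\<And>q. q \<in> QQ E \<Longrightarrow> f q = g q" "p \<in> QQ E"
  shows "pdx f p = pdx g p"
proof -
  obtain x t where p: "p = (x,t)" by force
  have x: "0 \<le> x" "x < E" and t: "t \<in> {0..E}" using assms(2) by (auto simp: QQ_def p)
  show ?thesis unfolding pdx_def p fst_conv snd_conv at_eq_half[OF x]
    by (rule vd_cong) (use x t assms(1) in \<open>auto simp: QQ_def\<close>)
qed

lemma loc_funpow:
  assumes "\<And>q. q \<in> QQ E \<Longrightarrow> f q = g q" "p \<in> QQ E"
  shows "(pdx ^^ j) f p = (pdx ^^ j) g p"
  using assms(2)
proof (induction j arbitrary: p)
  case 0 then show ?case using assms(1) by simp
next
  case (Suc j) then show ?case by (simp add: loc_pdx[of E "(pdx ^^ j) f" "(pdx ^^ j) g"])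
qed

lemma hpdx_cong:
  assumes "\<And>q. q \<in> QQ E \<Longrightarrow> f q = g q" "p \<in> QQ E" "has_pdx f p d"
  shows "has_pdx g p d"
proof -
  obtain x t where p: "p = (x,t)" by force
  have x: "0 \<le> x" "x < E" and t: "t \<in> {0..E}" using assms(2) by (auto simp: QQ_def p)
  show ?thesis using assms(3) unfolding has_pdx_def p fst_conv snd_conv at_eq_half[OF x]
    by (rule has_vector_derivative_transform[rotated 2]) (use x t assms(1) in \<open>auto simp: QQ_def\<close>)
qed

definition XC :: "nat \<Rightarrow> real \<Rightarrow> (real \<times> real \<Rightarrow> 'b::real_normed_vector) \<Rightarrow> bool" where
  "XC K E f \<longleftrightarrow> (\<forall>j\<le>K. continuous_on (QQ E) ((pdx ^^ j) f)) \<and>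
     (\<forall>j<K. \<forall>p\<in>QQ E. has_pdx ((pdx ^^ j) f) p ((pdx ^^ Suc j) f p))"

lemma XC_0: "XC 0 E f \<longleftrightarrow> continuous_on (QQ E) f"
  by (simp add: XC_def)

lemma XC_Suc: "XC (Suc K) E f \<longleftrightarrow> continuous_on (QQ E) f \<and> (\<forall>p\<in>QQ E. has_pdx f p (pdx f p)) \<and> XC K E (pdx f)"
proof -
  have sh: "(pdx ^^ j) (pdx f) = (pdx ^^ Suc j) f" for j by (simp only: funpow_Suc_right comp_apply)
  show ?thesis
  proof
    assume H: "XC (Suc K) E f"
    have c: "continuous_on (QQ E) f" using H unfolding XC_def by (metis funpow_0 le0)
    have d: "\<forall>p\<in>QQ E. has_pdx f p (pdx f p)" using H unfolding XC_def
      by (metis funpow_0 funpow_simps_right(2) comp_apply zero_less_Suc)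
    have "XC K E (pdx f)" unfolding XC_def sh using H unfolding XC_def
      by (metis Suc_le_mono Suc_less_eq)
    then show "continuous_on (QQ E) f \<and> (\<forall>p\<in>QQ E. has_pdx f p (pdx f p)) \<and> XC K E (pdx f)"
      using c d by blast
  next
    assume H: "continuous_on (QQ E) f \<and> (\<forall>p\<in>QQ E. has_pdx f p (pdx f p)) \<and> XC K E (pdx f)"
    have c: "continuous_on (QQ E) ((pdx ^^ j) f)" if "j \<le> Suc K" for j
    proof (cases j)
      case 0 then show ?thesis using H by simp
    next
      case (Suc i) then show ?thesis using H that unfolding XC_def sh by auto
    qed
    have d: "has_pdx ((pdx ^^ j) f) p ((pdx ^^ Suc j) f p)" if "j < Suc K" "p \<in> QQ E" for j p
    proof (cases j)
      case 0 then show ?thesis using H that by simp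
    next
      case (Suc i) then show ?thesis using H that unfolding XC_def sh by auto
    qed
    show "XC (Suc K) E f" unfolding XC_def using c d by blast
  qed
qed

lemma nbot_half: "0 \<le> (x::real) \<Longrightarrow> at x within {0..} \<noteq> bot"
proof -
  assume x: "0 \<le> x"
  have "x islimpt {0..x+1}" using islimpt_Icc[of 0 "x+1" x] x by simp
  then have "x islimpt {0..}" by (rule islimpt_subset) auto
  then show ?thesis using trivial_limit_within by blast
qed

lemma pdx_eq: "has_pdx f p d \<Longrightarrow> 0 \<le> fst p \<Longrightarrow> pdx f p = d"
  unfolding has_pdx_def pdx_def by (rule vector_derivative_within[OF nbot_half])

lemma QQ_fst: "p \<in> QQ E \<Longrightarrow> 0 \<le> fst p" by (auto simp: QQ_def)

lemma pdx_add:
  assumes "has_pdx f p (pdx f p)" "has_pdx g p (pdx g p)" "0 \<le> fst p"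
  shows "has_pdx (\<lambda>q. f q + g q) p (pdx f p + pdx g p)" 
    "pdx (\<lambda>q. f q + g q) p = pdx f p + pdx g p"
proof -
  show h: "has_pdx (\<lambda>q. f q + g q) p (pdx f p + pdx g p)"
    using assms unfolding has_pdx_def by (intro has_vector_derivative_add) auto
  show "pdx (\<lambda>q. f q + g q) p = pdx f p + pdx g p" by (rule pdx_eq[OF h assms(3)])
qed

lemma pdx_lin:
  assumes "bounded_linear L" "has_pdx f p (pdx f p)" "0 \<le> fst p"
  shows "has_pdx (\<lambda>q. L (f q)) p (L (pdx f p))" 
    "pdx (\<lambda>q. L (f q)) p = L (pdx f p)"
proof -
  show h: "has_pdx (\<lambda>q. L (f q)) p (L (pdx f p))"
    using bounded_linear.has_vector_derivative[OF assms(1), of "\<lambda>y. f (y, snd p)" "pdx f p" "at (fst p) within {0..}"]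
      assms unfolding has_pdx_def by auto
  show "pdx (\<lambda>q. L (f q)) p = L (pdx f p)" by (rule pdx_eq[OF h assms(3)])
qed

lemma pdx_bil:
  assumes "bounded_bilinear B" "has_pdx f p (pdx f p)" "has_pdx g p (pdx g p)" "0 \<le> fst p"
  shows "has_pdx (\<lambda>q. B (f q) (g q)) p (B (f p) (pdx g p) + B (pdx f p) (g p))" 
    "pdx (\<lambda>q. B (f q) (g q)) p = B (f p) (pdx g p) + B (pdx f p) (g p)"
proof -
  show h: "has_pdx (\<lambda>q. B (f q) (g q)) p (B (f p) (pdx g p) + B (pdx f p) (g p))"
    using bounded_bilinear.has_vector_derivative[OF assms(1), of "\<lambda>y. f (y, snd p)" "pdx f p" "fst p" "{0..}"
       "\<lambda>y. g (y, snd p)" "pdx g p"] assms unfolding has_pdx_def by auto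
  show "pdx (\<lambda>q. B (f q) (g q)) p = B (f p) (pdx g p) + B (pdx f p) (g p)" by (rule pdx_eq[OF h assms(4)])
qed

lemma XC_mono: "XC K E f \<Longrightarrow> K' \<le> K \<Longrightarrow> XC K' E f"
  unfolding XC_def by auto

lemma XC_cong: 
  assumes X: "XC K E f" and eq: "\<And>q. q \<in> QQ E \<Longrightarrow> f q = g q" 
  shows "XC K E g"
proof -
  have e: "(pdx ^^ j) f q = (pdx ^^ j) g q" if "q \<in> QQ E" for j q
    using loc_funpow[OF eq that] .
  have c: "continuous_on (QQ E) ((pdx ^^ j) g)" if "j \<le> K" for j
  proof -
    have "continuous_on (QQ E) ((pdx ^^ j) f)" using X that unfolding XC_def by blast
    moreover have "continuous_on (QQ E) ((pdx ^^ j) f) = continuous_on (QQ E) ((pdx ^^ j) g)"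
      by (rule continuous_on_cong) (auto simp: e)
    ultimately show ?thesis by simp
  qed
  have d: "has_pdx ((pdx ^^ j) g) p ((pdx ^^ Suc j) g p)" if "j < K" "p \<in> QQ E" for j p
  proof -
    have "has_pdx ((pdx ^^ j) f) p ((pdx ^^ Suc j) f p)" using X that unfolding XC_def by blast
    then have h1: "has_pdx ((pdx ^^ j) f) p ((pdx ^^ Suc j) g p)" by (simp only: e[OF that(2)])
    have ee: "\<And>q. q \<in> QQ E \<Longrightarrow> (pdx^^j) f q = (pdx^^j) g q" using e by blast
    show ?thesis by (rule hpdx_cong[OF ee that(2) h1])
  qed
  show ?thesis unfolding XC_def using c d by blast
qed

lemma XC_add:
  "XC K E f \<Longrightarrow> XC K E g \<Longrightarrow> XC K E (\<lambda>q. f q + g q) \<and>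
    (\<forall>j\<le>K. \<forall>p\<in>QQ E. (pdx ^^ j) (\<lambda>q. f q + g q) p = (pdx ^^ j) f p + (pdx ^^ j) g p)"
proof (induction K arbitrary: f g)
  case 0 then show ?case unfolding XC_0 by (simp add: continuous_on_add)
next
  case (Suc K)
  have hf: "\<forall>p\<in>QQ E. has_pdx f p (pdx f p)" and hg: "\<forall>p\<in>QQ E. has_pdx g p (pdx g p)"
    and xf: "XC K E (pdx f)" and xg: "XC K E (pdx g)"
    and cf: "continuous_on (QQ E) f" and cg: "continuous_on (QQ E) g"
    using Suc.prems by (auto simp: XC_Suc)
  have eq: "pdx (\<lambda>q. f q + g q) p = pdx f p + pdx g p" if "p \<in> QQ E" for p
    using pdx_add(2)[OF hf[rule_format,OF that] hg[rule_format,OF that] QQ_fst[OF that]] .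
  have IH: "XC K E (\<lambda>q. pdx f q + pdx g q)"
    "\<forall>j\<le>K. \<forall>p\<in>QQ E. (pdx ^^ j) (\<lambda>q. pdx f q + pdx g q) p = (pdx ^^ j) (pdx f) p + (pdx ^^ j) (pdx g) p"
    using Suc.IH[OF xf xg] by auto
  have 1: "XC (Suc K) E (\<lambda>q. f q + g q)"
  proof -
    have "continuous_on (QQ E) (\<lambda>q. f q + g q)" by (rule continuous_on_add[OF cf cg])
    moreover have "\<forall>p\<in>QQ E. has_pdx (\<lambda>q. f q + g q) p (pdx (\<lambda>q. f q + g q) p)"
    proof
      fix p assume p: "p \<in> QQ E"
      show "has_pdx (\<lambda>q. f q + g q) p (pdx (\<lambda>q. f q + g q) p)" 
        using pdx_add[OF hf[rule_format,OF p] hg[rule_format,OF p] QQ_fst[OF p]] by simp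
    qed
    moreover have "XC K E (pdx (\<lambda>q. f q + g q))" by (rule XC_cong[OF IH(1)]) (simp add: eq)
    ultimately show ?thesis unfolding XC_Suc by blast
  qed
  have 2: "(pdx ^^ j) (\<lambda>q. f q + g q) p = (pdx ^^ j) f p + (pdx ^^ j) g p" if "j \<le> Suc K" "p \<in> QQ E" for j p
  proof (cases j)
    case 0 then show ?thesis by simp
  next
    case (Suc i)
    have "(pdx ^^ j) (\<lambda>q. f q + g q) p = (pdx ^^ i) (pdx (\<lambda>q. f q + g q)) p"
      by (simp only: Suc funpow_Suc_right comp_apply)
    also have "\<dots> = (pdx ^^ i) (\<lambda>q. pdx f q + pdx g q) p"
      by (rule loc_funpow[OF eq that(2)])
    also have "\<dots> = (pdx ^^ i) (pdx f) p + (pdx ^^ i) (pdx g) p"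
      using IH(2) that Suc by simp
    also have "\<dots> = (pdx ^^ j) f p + (pdx ^^ j) g p"
      by (simp only: Suc funpow_Suc_right comp_apply)
    finally show ?thesis .
  qed
  show ?case using 1 2 by blast
qed

lemma XC_lin:
  assumes L: "bounded_linear L"
  shows "XC K E f \<Longrightarrow> XC K E (\<lambda>q. L (f q)) \<and>
    (\<forall>j\<le>K. \<forall>p\<in>QQ E. (pdx ^^ j) (\<lambda>q. L (f q)) p = L ((pdx ^^ j) f p))"
proof (induction K arbitrary: f)
  case 0 then show ?case unfolding XC_0 by (simp add: bounded_linear.continuous_on[OF L])
next
  case (Suc K)
  have hf: "\<forall>p\<in>QQ E. has_pdx f p (pdx f p)" 
    and xf: "XC K E (pdx f)" 
    and cf: "continuous_on (QQ E) f"
    using Suc.prems by (auto simp: XC_Suc)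
  have eq: "pdx (\<lambda>q. L (f q)) p = L (pdx f p)" if "p \<in> QQ E" for p
    using pdx_lin(2)[OF L hf[rule_format,OF that] QQ_fst[OF that]] .
  have IH: "XC K E (\<lambda>q. L (pdx f q))"
    "\<forall>j\<le>K. \<forall>p\<in>QQ E. (pdx ^^ j) (\<lambda>q. L (pdx f q)) p = L ((pdx ^^ j) (pdx f) p)"
    using Suc.IH[OF xf] by auto
  have 1: "XC (Suc K) E (\<lambda>q. L (f q))"
  proof -
    have "continuous_on (QQ E) (\<lambda>q. L (f q))" by (rule bounded_linear.continuous_on[OF L cf])
    moreover have "\<forall>p\<in>QQ E. has_pdx (\<lambda>q. L (f q)) p (pdx (\<lambda>q. L (f q)) p)"
    proof
      fix p assume p: "p \<in> QQ E"
      show "has_pdx (\<lambda>q. L (f q)) p (pdx (\<lambda>q. L (f q)) p)" 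
        using pdx_lin[OF L hf[rule_format,OF p] QQ_fst[OF p]] by simp
    qed
    moreover have "XC K E (pdx (\<lambda>q. L (f q)))" by (rule XC_cong[OF IH(1)]) (simp add: eq)
    ultimately show ?thesis unfolding XC_Suc by blast
  qed
  have 2: "(pdx ^^ j) (\<lambda>q. L (f q)) p = L ((pdx ^^ j) f p)" if "j \<le> Suc K" "p \<in> QQ E" for j p
  proof (cases j)
    case 0 then show ?thesis by simp
  next
    case (Suc i)
    have "(pdx ^^ j) (\<lambda>q. L (f q)) p = (pdx ^^ i) (pdx (\<lambda>q. L (f q))) p"
      by (simp only: Suc funpow_Suc_right comp_apply)
    also have "\<dots> = (pdx ^^ i) (\<lambda>q. L (pdx f q)) p"
      by (rule loc_funpow[OF eq that(2)])
    also have "\<dots> = L ((pdx ^^ i) (pdx f) p)"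
      using IH(2) that Suc by simp
    also have "\<dots> = L ((pdx ^^ j) f p)"
      by (simp only: Suc funpow_Suc_right comp_apply)
    finally show ?thesis .
  qed
  show ?case using 1 2 by blast
qed

lemma XC_bil:
  assumes B: "bounded_bilinear B"
  shows "XC K E f \<Longrightarrow> XC K E g \<Longrightarrow> XC K E (\<lambda>q. B (f q) (g q))"
proof (induction K arbitrary: f g)
  case 0 then show ?case unfolding XC_0 by (simp add: bounded_bilinear.continuous_on[OF B])
next
  case (Suc K)
  have hf: "\<forall>p\<in>QQ E. has_pdx f p (pdx f p)" and hg: "\<forall>p\<in>QQ E. has_pdx g p (pdx g p)"
    and xf: "XC K E (pdx f)" and xg: "XC K E (pdx g)"
    and cf: "continuous_on (QQ E) f" and cg: "continuous_on (QQ E) g"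
    using Suc.prems by (auto simp: XC_Suc)
  have xf': "XC K E f" and xg': "XC K E g" using Suc.prems XC_mono[of "Suc K" E _ K] by auto
  have eq: "pdx (\<lambda>q. B (f q) (g q)) p = B (f p) (pdx g p) + B (pdx f p) (g p)" if "p \<in> QQ E" for p
    using pdx_bil(2)[OF B hf[rule_format,OF that] hg[rule_format,OF that] QQ_fst[OF that]] .
  have IH: "XC K E (\<lambda>q. B (f q) (pdx g q) + B (pdx f q) (g q))"
    using XC_add[OF Suc.IH[OF xf' xg] Suc.IH[OF xf xg']] by auto
  have "continuous_on (QQ E) (\<lambda>q. B (f q) (g q))" by (rule bounded_bilinear.continuous_on[OF B cf cg])
  moreover have "\<forall>p\<in>QQ E. has_pdx (\<lambda>q. B (f q) (g q)) p (pdx (\<lambda>q. B (f q) (g q)) p)"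
  proof
    fix p assume p: "p \<in> QQ E"
    show "has_pdx (\<lambda>q. B (f q) (g q)) p (pdx (\<lambda>q. B (f q) (g q)) p)" 
      using pdx_bil[OF B hf[rule_format,OF p] hg[rule_format,OF p] QQ_fst[OF p]] by simp
  qed
  moreover have "XC K E (pdx (\<lambda>q. B (f q) (g q)))" by (rule XC_cong[OF IH]) (simp add: eq)
  ultimately show ?case unfolding XC_Suc by blast
qed



lemma nbot_Ico: "0 < E \<Longrightarrow> x \<in> {0..<E} \<Longrightarrow> at (x::real) within {0..<E} \<noteq> bot"
proof -
  assume a: "0 < E" "x \<in> {0..<E}"
  have "x islimpt {0..<E}" using islimpt_Ico[of 0 E x] a by auto
  then show ?thesis using trivial_limit_within[of x "{0..<E}"] by auto
qed

lemma nbot_Icc: "0 < T \<Longrightarrow> t \<in> {0..T} \<Longrightarrow> at (t::real) within {0..T} \<noteq> bot"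
proof -
  assume a: "0 < T" "t \<in> {0..T}"
  have "t islimpt {0..T}" using islimpt_Icc[of 0 T t] a by auto
  then show ?thesis using trivial_limit_within[of t "{0..T}"] by auto
qed

lemma mixed:
  fixes u G H U1 :: "real \<times> real \<Rightarrow> 'b::banach"
  assumes T: "0 \<le> T" and E: "0 < E"
  and ut: "\<And>x t. x \<in> {0..<E} \<Longrightarrow> t \<in> {0..T} \<Longrightarrow> ((\<lambda>s. u (x,s)) has_vector_derivative G (x,t)) (at t within {0..T})"
  and ux: "\<And>x t. x \<in> {0..<E} \<Longrightarrow> t \<in> {0..T} \<Longrightarrow> ((\<lambda>y. u (y,t)) has_vector_derivative U1 (x,t)) (at x within {0..<E})"
  and Gx: "\<And>x t. x \<in> {0..<E} \<Longrightarrow> t \<in> {0..T} \<Longrightarrow> ((\<lambda>y. G (y,t)) has_vector_derivative H (x,t)) (at x within {0..<E})"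
  and Hc: "continuous_on ({0..<E} \<times> {0..T}) H"
  and x: "x \<in> {0..<E}" and t: "t \<in> {0..T}"
  shows "((\<lambda>s. U1 (x,s)) has_vector_derivative H (x,t)) (at t within {0..T})"
proof -
  have I: "((\<lambda>\<sigma>. G (y,\<sigma>)) has_integral u (y,s) - u (y,0)) {0..s}" if "y \<in> {0..<E}" "s \<in> {0..T}" for y s
  proof (rule fundamental_theorem_of_calculus[where f="\<lambda>\<sigma>. u (y,\<sigma>)"])
    show "0 \<le> s" using that by auto
    fix \<sigma> assume "\<sigma> \<in> {0..s}"
    then show "((\<lambda>\<sigma>. u (y, \<sigma>)) has_vector_derivative G (y, \<sigma>)) (at \<sigma> within {0..s})"
      using ut[OF that(1), of \<sigma>] that by (auto intro: has_vector_derivative_within_subset)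
  qed
  have rep: "u (y,s) = u (y,0) + integral {0..s} (\<lambda>\<sigma>. G (y,\<sigma>))" if "y \<in> {0..<E}" "s \<in> {0..T}" for y s
    using integral_unique[OF I[OF that]] by simp
  have Hcs: "continuous_on {0..T} (\<lambda>\<sigma>. H (y,\<sigma>))" if "y \<in> {0..<E}" for y
    by (rule continuous_on_compose2[OF Hc]) (use that in \<open>auto intro!: continuous_intros\<close>)
  have U1rep: "U1 (x,s) = U1 (x,0) + integral {0..s} (\<lambda>\<sigma>. H (x,\<sigma>))" if s: "s \<in> {0..T}" for s
  proof -
    have L: "((\<lambda>y. integral (cbox 0 s) (\<lambda>\<sigma>. G (y,\<sigma>))) has_vector_derivative integral (cbox 0 s) (\<lambda>\<sigma>. H (x,\<sigma>)))
       (at x within {0..<E})"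
    proof (rule leibniz_rule_vector_derivative[where f="\<lambda>y \<sigma>. G (y,\<sigma>)" and fx="\<lambda>y \<sigma>. H (y,\<sigma>)"])
      show "((\<lambda>y. G (y, \<sigma>)) has_vector_derivative H (y, \<sigma>)) (at y within {0..<E})"
        if "y \<in> {0..<E}" "\<sigma> \<in> cbox 0 s" for y \<sigma> using Gx that s by auto
      show "(\<lambda>\<sigma>. G (y, \<sigma>)) integrable_on cbox 0 s" if "y \<in> {0..<E}" for y
        using I[OF that s] by (auto simp: integrable_on_def)
      show "continuous_on ({0..<E} \<times> cbox 0 s) (\<lambda>(y, \<sigma>). H (y, \<sigma>))"
      proof -
        have e: "(\<lambda>(y, \<sigma>). H (y, \<sigma>)) = H" by auto
        show ?thesis unfolding e using Hc by (rule continuous_on_subset) (use s in auto)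
      qed
    qed (use x in auto)
    have L2: "((\<lambda>y. u (y,0) + integral {0..s} (\<lambda>\<sigma>. G (y,\<sigma>))) has_vector_derivative 
         U1 (x,0) + integral {0..s} (\<lambda>\<sigma>. H (x,\<sigma>))) (at x within {0..<E})"
      using has_vector_derivative_add[OF ux[OF x, of 0] L] T by simp
    have L3: "((\<lambda>y. u (y,s)) has_vector_derivative 
         U1 (x,0) + integral {0..s} (\<lambda>\<sigma>. H (x,\<sigma>))) (at x within {0..<E})"
      by (rule has_vector_derivative_transform[OF x _ L2]) (use rep[OF _ s] in blast)
    show ?thesis by (rule vector_derivative_unique_within[OF nbot_Ico[OF E x] ux[OF x s] L3])
  qed
  have D: "((\<lambda>s. U1 (x,0) + integral {0..s} (\<lambda>\<sigma>. H (x,\<sigma>))) has_vector_derivative H (x,t)) (at t within {0..T})"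
    using has_vector_derivative_add[OF has_vector_derivative_const integral_has_vector_derivative[OF Hcs[OF x] t]]
    by simp
  show ?thesis by (rule has_vector_derivative_transform[OF t _ D]) (use U1rep in blast)
qed

definition AG :: "nat \<Rightarrow> (real \<times> real) set \<Rightarrow> (real \<times> real \<Rightarrow> 'b::real_normed_vector) \<Rightarrow> _ \<Rightarrow> bool" where
  "AG K P f1 f2 \<longleftrightarrow> (\<forall>i\<le>K. \<forall>p\<in>P. (pdx ^^ i) f1 p = (pdx ^^ i) f2 p)"

lemma AG_pdx: "AG (Suc K) P f1 f2 \<Longrightarrow> AG K P (pdx f1) (pdx f2)"
proof -
  have e: "(pdx ^^ i) (pdx f) = (pdx ^^ Suc i) f" for i and f :: "real \<times> real \<Rightarrow> 'a"
    by (simp only: funpow_Suc_right comp_apply)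
  assume "AG (Suc K) P f1 f2"
  then show ?thesis unfolding AG_def e by auto
qed

lemma AG_mono: "AG K P f1 f2 \<Longrightarrow> K' \<le> K \<Longrightarrow> AG K' P f1 f2"
  unfolding AG_def by auto

lemma AG_add:
  assumes "XC K E f1" "XC K E g1" "XC K E f2" "XC K E g2" "P \<subseteq> QQ E" "AG K P f1 f2" "AG K P g1 g2"
  shows "AG K P (\<lambda>q. f1 q + g1 q) (\<lambda>q. f2 q + g2 q)"
  using XC_add[OF assms(1,2)] XC_add[OF assms(3,4)] assms(5-7) unfolding AG_def by auto

lemma AG_lin:
  assumes "bounded_linear L" "XC K E f1" "XC K E f2" "P \<subseteq> QQ E" "AG K P f1 f2"
  shows "AG K P (\<lambda>q. L (f1 q)) (\<lambda>q. L (f2 q))"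
  using XC_lin[OF assms(1,2)] XC_lin[OF assms(1,3)] assms(4-5) unfolding AG_def by auto

lemma AG_bil:
  assumes B: "bounded_bilinear B"
  shows "XC K E f1 \<Longrightarrow> XC K E g1 \<Longrightarrow> XC K E f2 \<Longrightarrow> XC K E g2 \<Longrightarrow> P \<subseteq> QQ E \<Longrightarrow> AG K P f1 f2 \<Longrightarrow> AG K P g1 g2
   \<Longrightarrow> AG K P (\<lambda>q. B (f1 q) (g1 q)) (\<lambda>q. B (f2 q) (g2 q))"
proof (induction K arbitrary: f1 g1 f2 g2)
  case 0 
  have "f1 p = f2 p" "g1 p = g2 p" if "p \<in> P" for p using 0 that unfolding AG_def
    by (metis funpow_0 le0)+
  then show ?case unfolding AG_def by simp
next
  case (Suc K)
  have sub: "P \<subseteq> QQ E" by fact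
  have h: "\<forall>p\<in>QQ E. has_pdx f p (pdx f p)" "XC K E (pdx f)" "XC K E f"
    if "XC (Suc K) E f" for f :: "real \<times> real \<Rightarrow> 'a"
    using that XC_mono[OF that, of K] by (auto simp: XC_Suc)
  have h2: "\<forall>p\<in>QQ E. has_pdx f p (pdx f p)" "XC K E (pdx f)" "XC K E f"
    if "XC (Suc K) E f" for f :: "real \<times> real \<Rightarrow> 'b"
    using that XC_mono[OF that, of K] by (auto simp: XC_Suc)
  note f1 = h[OF Suc.prems(1)] and f2 = h[OF Suc.prems(3)]
  note g1 = h2[OF Suc.prems(2)] and g2 = h2[OF Suc.prems(4)]
  have ag: "AG K P f1 f2" "AG K P g1 g2" "AG K P (pdx f1) (pdx f2)" "AG K P (pdx g1) (pdx g2)"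
    using AG_mono[OF Suc.prems(6), of K] AG_mono[OF Suc.prems(7), of K] AG_pdx[OF Suc.prems(6)] AG_pdx[OF Suc.prems(7)]
    by auto
  have IH1: "AG K P (\<lambda>q. B (f1 q) (pdx g1 q)) (\<lambda>q. B (f2 q) (pdx g2 q))"
    by (rule Suc.IH[OF f1(3) g1(2) f2(3) g2(2) sub ag(1) ag(4)])
  have IH2: "AG K P (\<lambda>q. B (pdx f1 q) (g1 q)) (\<lambda>q. B (pdx f2 q) (g2 q))"
    by (rule Suc.IH[OF f1(2) g1(3) f2(2) g2(3) sub ag(3) ag(2)])
  have key: "(pdx ^^ Suc i) (\<lambda>q. B (f q) (g q)) p = 
     (pdx ^^ i) (\<lambda>q. B (f q) (pdx g q)) p + (pdx ^^ i) (\<lambda>q. B (pdx f q) (g q)) p"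
    if "i \<le> K" "p \<in> QQ E" "\<forall>p\<in>QQ E. has_pdx f p (pdx f p)" "XC K E (pdx f)" "XC K E f"
       "\<forall>p\<in>QQ E. has_pdx g p (pdx g p)" "XC K E (pdx g)" "XC K E g" for i p f g
  proof -
    have eq: "pdx (\<lambda>q. B (f q) (g q)) q = B (f q) (pdx g q) + B (pdx f q) (g q)" if "q \<in> QQ E" for q
      using pdx_bil(2)[OF B \<open>\<forall>p\<in>QQ E. has_pdx f p (pdx f p)\<close>[rule_format, OF that] 
           \<open>\<forall>p\<in>QQ E. has_pdx g p (pdx g p)\<close>[rule_format, OF that] QQ_fst[OF that]] .
    have "(pdx ^^ Suc i) (\<lambda>q. B (f q) (g q)) p = (pdx ^^ i) (pdx (\<lambda>q. B (f q) (g q))) p"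
      by (simp only: funpow_Suc_right comp_apply)
    also have "\<dots> = (pdx ^^ i) (\<lambda>q. B (f q) (pdx g q) + B (pdx f q) (g q)) p"
      by (rule loc_funpow[OF eq that(2)])
    also have "\<dots> = (pdx ^^ i) (\<lambda>q. B (f q) (pdx g q)) p + (pdx ^^ i) (\<lambda>q. B (pdx f q) (g q)) p"
      using XC_add[OF XC_bil[OF B that(5) that(7)] XC_bil[OF B that(4) that(8)]] that(1,2) by simp
    finally show ?thesis .
  qed
  show ?case unfolding AG_def
  proof (intro allI impI ballI)
    fix i p assume i: "i \<le> Suc K" and p: "p \<in> P"
    show "(pdx ^^ i) (\<lambda>q. B (f1 q) (g1 q)) p = (pdx ^^ i) (\<lambda>q. B (f2 q) (g2 q)) p"
    proof (cases i)
      case 0 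
      have "f1 p = f2 p" "g1 p = g2 p" using Suc.prems(6,7) p unfolding AG_def
        by (metis funpow_0 le0)+
      then show ?thesis using 0 by simp
    next
      case (Suc i')
      have i': "i' \<le> K" using i Suc by simp
      have pq: "p \<in> QQ E" using p sub by auto
      show ?thesis unfolding Suc key[OF i' pq f1 g1] key[OF i' pq f2 g2]
        using IH1 IH2 i' p unfolding AG_def by simp
    qed
  qed
qed



lemma sR: "(r *\<^sub>R z :: complex) = of_real r * z" by (simp add: scaleR_conv_of_real)

lemma bb_mult: "bounded_bilinear ((**) :: complex^'n^'m \<Rightarrow> complex^'p^'n \<Rightarrow> complex^'p^'m)"
proof -
  have "bilinear ((**) :: complex^'n^'m \<Rightarrow> complex^'p^'n \<Rightarrow> complex^'p^'m)"
    unfolding bilinear_def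
  proof (intro conjI allI)
    fix A :: "complex^'n^'m"
    show "linear (\<lambda>B :: complex^'p^'n. A ** B)"
      by (rule linearI) (simp_all add: matrix_matrix_mult_def vec_eq_iff sum.distrib ring_distribs
          sR sum_distrib_left mult.left_commute)
  next
    fix B :: "complex^'p^'n"
    show "linear (\<lambda>A :: complex^'n^'m. A ** B)"
      by (rule linearI) (simp_all add: matrix_matrix_mult_def vec_eq_iff sum.distrib ring_distribs
          sR sum_distrib_left mult.assoc)
  qed
  then show ?thesis using bilinear_conv_bounded_bilinear by blast
qed

lemma bl_mstar: "bounded_linear (mstar :: complex^'n^'m \<Rightarrow> complex^'m^'n)"
proof -
  have "linear (mstar :: complex^'n^'m \<Rightarrow> complex^'m^'n)"
    by (rule linearI) (simp_all add: mstar_def vec_eq_iff sR)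
  then show ?thesis using linear_conv_bounded_linear by blast
qed

lemma bl_cscale: "bounded_linear (cscale c :: complex^'n^'m \<Rightarrow> complex^'n^'m)"
proof -
  have "linear (cscale c :: complex^'n^'m \<Rightarrow> complex^'n^'m)"
    by (rule linearI) (simp_all add: cscale_def vec_eq_iff sR ring_distribs mult.left_commute)
  then show ?thesis using linear_conv_bounded_linear by blast
qed

definition Lop :: "complex^'n^'m \<Rightarrow> complex^'n^'m" where
  "Lop x = (1/2) *\<^sub>R cscale \<i> x"

lemma bl_Lop: "bounded_linear Lop"
  unfolding Lop_def by (intro bounded_linear_compose[OF bounded_linear_scaleR_right bl_cscale])

lemma Lop_inj: "Lop x = Lop y \<Longrightarrow> x = y"
  by (auto simp: Lop_def cscale_def vec_eq_iff sR)

definition Nl :: "(real \<times> real \<Rightarrow> complex^'n^'m) \<Rightarrow> real \<times> real \<Rightarrow> complex^'n^'m" where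
  "Nl v = (\<lambda>p. v p ** mstar (v p) ** v p)"

definition Phi :: "(real \<times> real \<Rightarrow> complex^'n^'m) \<Rightarrow> real \<times> real \<Rightarrow> complex^'n^'m" where
  "Phi v = (\<lambda>p. Lop (pdx (pdx v) p + (-2) *\<^sub>R Nl v p))"

lemma XC_Nl: "XC K E v \<Longrightarrow> XC K E (Nl v)"
  unfolding Nl_def
  by (intro XC_bil[OF bb_mult] XC_lin[OF bl_mstar, THEN conjunct1]) 

lemma AG_Nl: "XC K E v \<Longrightarrow> XC K E w \<Longrightarrow> P \<subseteq> QQ E \<Longrightarrow> AG K P v w \<Longrightarrow> AG K P (Nl v) (Nl w)"
  unfolding Nl_def
  by (intro AG_bil[OF bb_mult] XC_bil[OF bb_mult] XC_lin[OF bl_mstar, THEN conjunct1] AG_lin[OF bl_mstar]) 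

lemma pdx2: "(pdx ^^ j) (pdx (pdx v)) = (pdx ^^ (j+2)) v"
  by (simp only: funpow_Suc_right comp_apply add_2_eq_Suc')

lemma XC_Phi:
  assumes "XC (K+2) E v"
  shows "XC K E (Phi v)" 
    "\<forall>j\<le>K. \<forall>p\<in>QQ E. (pdx ^^ j) (Phi v) p = Lop ((pdx ^^ (j+2)) v p + (-2) *\<^sub>R (pdx ^^ j) (Nl v) p)"
proof -
  have x2: "XC K E (pdx (pdx v))" using assms by (simp add: XC_Suc)
  note R = XC_lin[OF bounded_linear_scaleR_right[of "-2"] XC_Nl[OF XC_mono[OF assms, of K]]]
  have xn: "XC K E (\<lambda>q. (-2) *\<^sub>R Nl v q)" by (rule conjunct1[OF R]) simp
  have fn: "\<forall>j\<le>K. \<forall>p\<in>QQ E. (pdx ^^ j) (\<lambda>q. (-2) *\<^sub>R Nl v q) p = (-2) *\<^sub>R (pdx ^^ j) (Nl v) p"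
    by (rule conjunct2[OF R]) simp
  have A: "XC K E (\<lambda>q. pdx (pdx v) q + (-2) *\<^sub>R Nl v q)"
     "\<forall>j\<le>K. \<forall>p\<in>QQ E. (pdx ^^ j) (\<lambda>q. pdx (pdx v) q + (-2) *\<^sub>R Nl v q) p = (pdx ^^ j) (pdx (pdx v)) p + (pdx ^^ j) (\<lambda>q. (-2) *\<^sub>R Nl v q) p"
    using XC_add[OF x2 xn] by auto
  have B: "XC K E (Phi v)" "\<forall>j\<le>K. \<forall>p\<in>QQ E. (pdx ^^ j) (Phi v) p = Lop ((pdx ^^ j) (\<lambda>q. pdx (pdx v) q + (-2) *\<^sub>R Nl v q) p)"
    using XC_lin[OF bl_Lop A(1)] unfolding Phi_def by auto
  show "XC K E (Phi v)" by (rule B(1))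
  show "\<forall>j\<le>K. \<forall>p\<in>QQ E. (pdx ^^ j) (Phi v) p = Lop ((pdx ^^ (j+2)) v p + (-2) *\<^sub>R (pdx ^^ j) (Nl v) p)"
  proof (intro allI impI ballI)
    fix j p assume j: "j \<le> K" and p: "p \<in> QQ E"
    show "(pdx ^^ j) (Phi v) p = Lop ((pdx ^^ (j+2)) v p + (-2) *\<^sub>R (pdx ^^ j) (Nl v) p)"
      using B(2)[rule_format, OF j p] A(2)[rule_format, OF j p] fn[rule_format, OF j p] pdx2[of j v] by metis
  qed
qed



lemma Cq_parts:
  assumes "Cq a M v"
  shows "\<forall>p\<in>dom_D a. has_pdx v p (pdx v p) \<and> has_pdt a v p (pdt a v p)"
    "\<forall>i j. (\<forall>k. M i j k > 0) \<and> quasi_analytic (M i j) \<and> (\<lambda>x. v (x, 0) $ i $ j) \<in> DClass (M i j)"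
    "\<forall>k. \<exists>e>0. ereal e < a \<and>
         (\<forall>j<k. \<forall>p\<in>square e. has_pdx ((pdx ^^ j) v) p (pdx ((pdx ^^ j) v) p)) \<and>
         (\<forall>j\<le>k. continuous_on (square e) ((pdx ^^ j) v))"
proof -
  note A = assms[unfolded Cq_def]
  show "\<forall>p\<in>dom_D a. has_pdx v p (pdx v p) \<and> has_pdt a v p (pdt a v p)" using A by (elim conjE) assumption
  show "\<forall>i j. (\<forall>k. M i j k > 0) \<and> quasi_analytic (M i j) \<and> (\<lambda>x. v (x, 0) $ i $ j) \<in> DClass (M i j)" 
    using A by (elim conjE) assumption
  show "\<forall>k. \<exists>e>0. ereal e < a \<and>
         (\<forall>j<k. \<forall>p\<in>square e. has_pdx ((pdx ^^ j) v) p (pdx ((pdx ^^ j) v) p)) \<and>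
         (\<forall>j\<le>k. continuous_on (square e) ((pdx ^^ j) v))" using A by (elim conjE) assumption
qed

lemma QQ_sub: "E' \<le> E \<Longrightarrow> QQ E' \<subseteq> QQ E" unfolding QQ_def by auto

lemma XC_Emono: 
  assumes X: "XC K E f" and le: "E' \<le> E" shows "XC K E' f"
proof -
  have s: "QQ E' \<subseteq> QQ E" by (rule QQ_sub[OF le])
  show ?thesis using X unfolding XC_def using continuous_on_subset[OF _ s] s by blast
qed

lemma Cq_XC:
  assumes "Cq a M v"
  shows "\<exists>e>0. ereal e < a \<and> XC K e v"
proof -
  obtain e where e: "e > 0" "ereal e < a" 
    and d: "\<forall>j<K. \<forall>p\<in>square e. has_pdx ((pdx ^^ j) v) p (pdx ((pdx ^^ j) v) p)"
    and c: "\<forall>j\<le>K. continuous_on (square e) ((pdx ^^ j) v)"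
    using Cq_parts(3)[OF assms, rule_format, of K] by blast
  have sub: "QQ e \<subseteq> square e" unfolding QQ_def square_def by auto
  have c2: "\<forall>j\<le>K. continuous_on (QQ e) ((pdx ^^ j) v)" using c continuous_on_subset[OF _ sub] by blast
  have d2: "\<forall>j<K. \<forall>p\<in>QQ e. has_pdx ((pdx ^^ j) v) p ((pdx ^^ Suc j) v p)"
  proof (intro allI impI ballI)
    fix j p assume "j < K" "p \<in> QQ e"
    then have "has_pdx ((pdx ^^ j) v) p (pdx ((pdx ^^ j) v) p)" using d sub by blast
    then show "has_pdx ((pdx ^^ j) v) p ((pdx ^^ Suc j) v p)" by simp
  qed
  have "XC K e v" unfolding XC_def using c2 d2 by blast
  then show ?thesis using e by blast
qed

lemma at_t_eq: 
  assumes "0 \<le> t" "t < E" "ereal E < a"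
  shows "at t within {s. 0 \<le> s \<and> ereal s < a} = at t within {0..E}"
proof (rule at_within_nhd[where S="{t-1<..<E}"])
  have lt: "ereal s < a" if "s < E" for s 
  proof -
    have "ereal s < ereal E" using that by simp
    then show ?thesis using assms(3) by (rule less_trans)
  qed
  show "{s. 0 \<le> s \<and> ereal s < a} \<inter> {t - 1<..<E} - {t} = {0..E} \<inter> {t - 1<..<E} - {t}"
  proof (rule set_eqI)
    fix s show "s \<in> {s. 0 \<le> s \<and> ereal s < a} \<inter> {t - 1<..<E} - {t} \<longleftrightarrow> s \<in> {0..E} \<inter> {t - 1<..<E} - {t}"
      using lt[of s] by auto
  qed
  show "t \<in> {t - 1<..<E}" using assms by simp
  show "open {t - 1<..<E}" by simp
qed

lemma Phi_pdt:
  fixes v :: "real \<times> real \<Rightarrow> complex^'n^'m"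
  assumes "solves_NLS a v" "p \<in> dom_D a"
  shows "pdt a v p = Phi v p"
proof -
  have e: "2 *\<^sub>R pdt a v p = cscale \<i> (pdx (pdx v) p - 2 *\<^sub>R (v p ** mstar (v p) ** v p))"
    using assms unfolding solves_NLS_def by blast
  have "pdt a v p = (1/2) *\<^sub>R (2 *\<^sub>R pdt a v p)" by simp
  also have "\<dots> = (1/2) *\<^sub>R cscale \<i> (pdx (pdx v) p + (-2) *\<^sub>R (v p ** mstar (v p) ** v p))" 
    unfolding e by simp
  also have "\<dots> = Phi v p" unfolding Phi_def Lop_def Nl_def by (rule refl)
  finally show ?thesis .
qed

lemma claim:
  fixes v :: "real \<times> real \<Rightarrow> complex^'n^'m"
  assumes Cq: "Cq a M v" and N: "solves_NLS a v" and X: "XC (K+2) E v" and E: "0 < E" "ereal E < a"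
  shows "k \<le> K \<Longrightarrow> x \<in> {0..<E} \<Longrightarrow> t \<in> {0..E} \<Longrightarrow> 
    ((\<lambda>s. (pdx ^^ k) v (x,s)) has_vector_derivative (pdx ^^ k) (Phi v) (x,t)) (at t within {0..E})"
proof (induction k arbitrary: x t)
  case 0
  have ta: "ereal s < a" if "s \<le> E" for s 
  proof -
    have "ereal s \<le> ereal E" using that by simp
    then show ?thesis using E(2) by (rule order.strict_trans1)
  qed
  have D: "(x,t) \<in> dom_D a" using 0 ta by (auto simp: dom_D_def)
  have h: "has_pdt a v (x,t) (pdt a v (x,t))" using Cq_parts(1)[OF Cq] D by blast
  then have "((\<lambda>s. v (x,s)) has_vector_derivative Phi v (x,t)) (at t within {s. 0 \<le> s \<and> ereal s < a})"
    unfolding has_pdt_def Phi_pdt[OF N D] by simp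
  then have "((\<lambda>s. v (x,s)) has_vector_derivative Phi v (x,t)) (at t within {0..E})"
    by (rule has_vector_derivative_within_subset) (use ta in auto)
  then show ?case by simp
next
  case (Suc k)
  have XP: "XC K E (Phi v)" using XC_Phi(1)[OF X] .
  show ?case
  proof (rule mixed[where u="(pdx ^^ k) v" and G="(pdx ^^ k) (Phi v)"])
    show "0 \<le> E" "0 < E" using E by auto
    show "x \<in> {0..<E}" "t \<in> {0..E}" by fact+
    show "((\<lambda>s. (pdx ^^ k) v (x, s)) has_vector_derivative (pdx ^^ k) (Phi v) (x, t)) (at t within {0..E})"
      if "x \<in> {0..<E}" "t \<in> {0..E}" for x t using Suc that by auto
    show "((\<lambda>y. (pdx ^^ k) v (y, t)) has_vector_derivative (pdx ^^ Suc k) v (x, t)) (at x within {0..<E})"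
      if "x \<in> {0..<E}" "t \<in> {0..E}" for x t
    proof -
      have "(x,t) \<in> QQ E" using that by (auto simp: QQ_def)
      moreover have "k < K + 2" using Suc by simp
      ultimately have "has_pdx ((pdx ^^ k) v) (x,t) ((pdx ^^ Suc k) v (x,t))"
        using X unfolding XC_def by blast
      then show ?thesis unfolding has_pdx_def 
        by (auto intro: has_vector_derivative_within_subset)
    qed
    show "((\<lambda>y. (pdx ^^ k) (Phi v) (y, t)) has_vector_derivative (pdx ^^ Suc k) (Phi v) (x, t)) (at x within {0..<E})"
      if "x \<in> {0..<E}" "t \<in> {0..E}" for x t
    proof -
      have "(x,t) \<in> QQ E" using that by (auto simp: QQ_def)
      moreover have "k < K" using Suc by simp
      ultimately have "has_pdx ((pdx ^^ k) (Phi v)) (x,t) ((pdx ^^ Suc k) (Phi v) (x,t))"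
        using XP unfolding XC_def by blast
      then show ?thesis unfolding has_pdx_def 
        by (auto intro: has_vector_derivative_within_subset)
    qed
    show "continuous_on ({0..<E} \<times> {0..E}) ((pdx ^^ Suc k) (Phi v))"
      using XP Suc unfolding XC_def QQ_def by blast
  qed
qed



lemma part1:
  fixes v :: "real \<times> real \<Rightarrow> complex^'n^'m"
  assumes Cq: "Cq a M v" and N: "solves_NLS a v"
  shows "\<exists>e>0. ereal e < a \<and> (\<forall>k\<le>r. \<forall>p\<in>square e.
            (\<forall>q\<in>square e. has_pdx ((pdx ^^ k) v) q (pdx ((pdx ^^ k) v) q)
                           \<and> has_pdt a ((pdx ^^ k) v) q (pdt a ((pdx ^^ k) v) q)) \<and>
            (\<exists>L. ((\<lambda>s. pdx ((pdx ^^ k) v) (fst p, s)) has_vector_derivative L)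
                      (at (snd p) within {0..e}) \<and>
                 ((\<lambda>y. pdt a ((pdx ^^ k) v) (y, snd p)) has_vector_derivative L)
                      (at (fst p) within {0..e})))"
proof -
  obtain E where E: "E > 0" "ereal E < a" and X: "XC ((r+1)+2) E v"
    using Cq_XC[OF Cq, of "(r+1)+2"] by blast
  note CL = claim[OF Cq N X E]
  have XP: "XC (r+1) E (Phi v)" by (rule XC_Phi(1)[OF X])
  have pdt_has: "has_pdt a ((pdx ^^ k) v) (y,t) ((pdx ^^ k) (Phi v) (y,t))"
    and pdt_eq: "pdt a ((pdx ^^ k) v) (y,t) = (pdx ^^ k) (Phi v) (y,t)"
    if "k \<le> r+1" "y \<in> {0..<E}" "t \<in> {0..<E}" for k y t
  proof -
    have at: "at t within {s. 0 \<le> s \<and> ereal s < a} = at t within {0..E}"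
      by (rule at_t_eq) (use that E in auto)
    have h: "((\<lambda>s. (pdx ^^ k) v (y,s)) has_vector_derivative (pdx ^^ k) (Phi v) (y,t)) (at t within {0..E})"
      by (rule CL) (use that in auto)
    show "has_pdt a ((pdx ^^ k) v) (y,t) ((pdx ^^ k) (Phi v) (y,t))"
      unfolding has_pdt_def fst_conv snd_conv at by (rule h)
    have nb: "at t within {0..E} \<noteq> bot" by (rule nbot_Icc) (use that E in auto)
    show "pdt a ((pdx ^^ k) v) (y,t) = (pdx ^^ k) (Phi v) (y,t)"
      unfolding pdt_def fst_conv snd_conv at by (rule vector_derivative_within[OF nb h])
  qed
  have sq: "0 \<le> x" "x < E" "0 \<le> t" "t < E" "x \<le> E/2" "t \<le> E/2" if "(x,t) \<in> square (E/2)" for x t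
    using that E by (auto simp: square_def)
  have A: "has_pdx ((pdx ^^ k) v) q (pdx ((pdx ^^ k) v) q)" if "k \<le> r" "q \<in> square (E/2)" for k q
  proof -
    obtain x t where q: "q = (x,t)" by force
    have "q \<in> QQ E" using sq[of x t] that q by (auto simp: QQ_def)
    moreover have "k < r+1+2" using that by simp
    ultimately have "has_pdx ((pdx ^^ k) v) q ((pdx ^^ Suc k) v q)" using X unfolding XC_def by blast
    then show ?thesis by simp
  qed
  have B: "has_pdt a ((pdx ^^ k) v) q (pdt a ((pdx ^^ k) v) q)" if "k \<le> r" "q \<in> square (E/2)" for k q
  proof -
    obtain x t where q: "q = (x,t)" by force
    have "has_pdt a ((pdx ^^ k) v) q (pdt a ((pdx ^^ k) v) q) \<longleftrightarrow> 
          has_pdt a ((pdx ^^ k) v) (x,t) ((pdx ^^ k) (Phi v) (x,t))"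
      unfolding q by (subst pdt_eq) (use that sq[of x t] q in auto)
    then show ?thesis using pdt_has[of k x t] that sq[of x t] q by auto
  qed
  have C: "\<exists>L. ((\<lambda>s. pdx ((pdx ^^ k) v) (fst p, s)) has_vector_derivative L)
                      (at (snd p) within {0..E/2}) \<and>
                 ((\<lambda>y. pdt a ((pdx ^^ k) v) (y, snd p)) has_vector_derivative L)
                      (at (fst p) within {0..E/2})" if "k \<le> r" "p \<in> square (E/2)" for k p
  proof -
    obtain x t where p: "p = (x,t)" by force
    note s = sq[of x t, OF that(2)[unfolded p]]
    have c1: "((\<lambda>s. (pdx ^^ Suc k) v (x,s)) has_vector_derivative (pdx ^^ Suc k) (Phi v) (x,t)) (at t within {0..E})"
      by (rule CL) (use that s in auto)
    have c1': "((\<lambda>s. pdx ((pdx ^^ k) v) (x,s)) has_vector_derivative (pdx ^^ Suc k) (Phi v) (x,t)) (at t within {0..E/2})"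
      using has_vector_derivative_within_subset[OF c1, of "{0..E/2}"] by simp
    have "(x,t) \<in> QQ E" using s by (auto simp: QQ_def)
    moreover have "k < r+1" using that by simp
    ultimately have "has_pdx ((pdx ^^ k) (Phi v)) (x,t) ((pdx ^^ Suc k) (Phi v) (x,t))" 
      using XP unfolding XC_def by blast
    then have g: "((\<lambda>y. (pdx ^^ k) (Phi v) (y,t)) has_vector_derivative (pdx ^^ Suc k) (Phi v) (x,t)) (at x within {0..E/2})"
      unfolding has_pdx_def by (auto intro: has_vector_derivative_within_subset)
    have g': "((\<lambda>y. pdt a ((pdx ^^ k) v) (y,t)) has_vector_derivative (pdx ^^ Suc k) (Phi v) (x,t)) (at x within {0..E/2})"
    proof (rule has_vector_derivative_transform[OF _ _ g])
      show "x \<in> {0..E/2}" using s by auto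
      fix y assume "y \<in> {0..E/2}"
      then show "pdt a ((pdx ^^ k) v) (y, t) = (pdx ^^ k) (Phi v) (y, t)"
        by (intro pdt_eq) (use that s E in auto)
    qed
    show ?thesis unfolding p fst_conv snd_conv using c1' g' by blast
  qed
  have "ereal (E/2) < a"
  proof -
    have "ereal (E/2) \<le> ereal E" using E by simp
    then show ?thesis using E(2) by (rule order.strict_trans1)
  qed
  then show ?thesis using A B C E(1) by (intro exI[of _ "E/2"]) auto
qed



lemma part2:
  fixes v w :: "real \<times> real \<Rightarrow> complex^'n^'m"
  assumes Cqv: "Cq a M v" and Nv: "solves_NLS a v" and Cqw: "Cq a M w" and Nw: "solves_NLS a w"
    and bd: "\<forall>t. 0 \<le> t \<and> ereal t < a \<longrightarrow> w (0, t) = v (0, t) \<and> pdx w (0, t) = pdx v (0, t)"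
  shows "\<exists>e>0. ereal e < a \<and> (\<forall>t\<in>{0..e}. (pdx ^^ k) w (0, t) = (pdx ^^ k) v (0, t))"
proof -
  obtain Ev where Ev: "Ev > 0" "ereal Ev < a" and Xv0: "XC (k+2) Ev v" using Cq_XC[OF Cqv] by blast
  obtain Ew where Ew: "Ew > 0" "ereal Ew < a" and Xw0: "XC (k+2) Ew w" using Cq_XC[OF Cqw] by blast
  define E where "E = min Ev Ew"
  have E: "E > 0" "ereal E < a" 
  proof -
    show "E > 0" using Ev Ew by (simp add: E_def)
    have "ereal E \<le> ereal Ev" by (simp add: E_def)
    then show "ereal E < a" using Ev(2) by (rule order.strict_trans1)
  qed
  have Xv: "XC (k+2) E v" by (rule XC_Emono[OF Xv0]) (simp add: E_def)
  have Xw: "XC (k+2) E w" by (rule XC_Emono[OF Xw0]) (simp add: E_def)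
  define P where "P = {0::real} \<times> {0..E}"
  have sub: "P \<subseteq> QQ E" using E by (auto simp: P_def QQ_def)
  note CLv = claim[OF Cqv Nv Xv E] and CLw = claim[OF Cqw Nw Xw E]
  note Fv = XC_Phi(2)[OF Xv] and Fw = XC_Phi(2)[OF Xw]
  have bdE: "w (0,t) = v (0,t)" "pdx w (0,t) = pdx v (0,t)" if "t \<in> {0..E}" for t
  proof -
    have "ereal t \<le> ereal E" using that by simp
    then have "ereal t < a" using E(2) by (rule order.strict_trans1)
    then show "w (0,t) = v (0,t)" "pdx w (0,t) = pdx v (0,t)" using bd that by auto
  qed
  have AG1: "AG (Suc 0) P w v" unfolding AG_def
  proof (intro allI impI ballI)
    fix i p assume i: "i \<le> Suc 0" and p: "p \<in> P"
    then obtain t where pt: "p = (0,t)" "t \<in> {0..E}" by (auto simp: P_def)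
    from i have "i = 0 \<or> i = Suc 0" by auto
    then show "(pdx ^^ i) w p = (pdx ^^ i) v p" using bdE[OF pt(2)] pt(1) by auto
  qed
  have main: "j \<le> k \<Longrightarrow> AG j P w v" for j
  proof (induction j rule: less_induct)
    case (less j)
    show ?case
    proof (cases "j \<le> Suc 0")
      case True then show ?thesis using AG_mono[OF AG1] by blast
    next
      case False
      then obtain j' where j': "j = Suc (Suc j')" by (metis Suc_le_mono le0 not0_implies_Suc)
      have IH: "AG (Suc j') P w v" using less j' by auto
      have jk: "j' \<le> k" using less j' by simp
      show ?thesis unfolding AG_def
      proof (intro allI impI ballI)
        fix i p assume i: "i \<le> j" and p: "p \<in> P"
        show "(pdx ^^ i) w p = (pdx ^^ i) v p"
        proof (cases "i \<le> Suc j'")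
          case True then show ?thesis using IH p unfolding AG_def by blast
        next
          case False
          then have ii: "i = j' + 2" using i j' by simp
          obtain t where pt: "p = (0,t)" "t \<in> {0..E}" using p by (auto simp: P_def)
          have pQ: "p \<in> QQ E" using p sub by auto
          have agr: "(pdx ^^ j') w (0,s) = (pdx ^^ j') v (0,s)" if "s \<in> {0..E}" for s
            using IH that unfolding AG_def P_def by auto
          have hw: "((\<lambda>s. (pdx ^^ j') w (0,s)) has_vector_derivative (pdx ^^ j') (Phi w) (0,t)) (at t within {0..E})"
            by (rule CLw) (use jk pt E in auto)
          have hv: "((\<lambda>s. (pdx ^^ j') v (0,s)) has_vector_derivative (pdx ^^ j') (Phi v) (0,t)) (at t within {0..E})"
            by (rule CLv) (use jk pt E in auto)
          have hv': "((\<lambda>s. (pdx ^^ j') w (0,s)) has_vector_derivative (pdx ^^ j') (Phi v) (0,t)) (at t within {0..E})"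
            by (rule has_vector_derivative_transform[OF pt(2) _ hv]) (use agr in auto)
          have Geq: "(pdx ^^ j') (Phi w) (0,t) = (pdx ^^ j') (Phi v) (0,t)"
            by (rule vector_derivative_unique_within[OF nbot_Icc[OF E(1) pt(2)] hw hv'])
          have Xw': "XC j' E w" and Xv': "XC j' E v" using XC_mono[OF Xw] XC_mono[OF Xv] jk by auto
          have AGj: "AG j' P w v" using AG_mono[OF IH] by auto
          have Neq: "(pdx ^^ j') (Nl w) p = (pdx ^^ j') (Nl v) p"
            using AG_Nl[OF Xw' Xv' sub AGj] p unfolding AG_def by blast
          have "Lop ((pdx ^^ (j'+2)) w p + (-2) *\<^sub>R (pdx ^^ j') (Nl w) p) 
              = Lop ((pdx ^^ (j'+2)) v p + (-2) *\<^sub>R (pdx ^^ j') (Nl v) p)"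
            using Fw[rule_format, OF jk pQ] Fv[rule_format, OF jk pQ] Geq pt(1) by simp
          then have "(pdx ^^ (j'+2)) w p + (-2) *\<^sub>R (pdx ^^ j') (Nl w) p 
              = (pdx ^^ (j'+2)) v p + (-2) *\<^sub>R (pdx ^^ j') (Nl v) p" by (rule Lop_inj)
          then have "(pdx ^^ (j'+2)) w p = (pdx ^^ (j'+2)) v p" unfolding Neq by simp
          then show ?thesis unfolding ii .
        qed
      qed
    qed
  qed
  have "\<forall>t\<in>{0..E}. (pdx ^^ k) w (0, t) = (pdx ^^ k) v (0, t)"
    using main[of k] unfolding AG_def P_def by auto
  then show ?thesis using E by blast
qed



lemma bl_entry: "bounded_linear (\<lambda>A :: complex^'n^'m. A $ i $ j)"
  using bounded_linear_compose[OF bounded_linear_vec_nth[of j] bounded_linear_vec_nth[of i]] by simp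

lemma fd_lemma:
  fixes v :: "real \<times> real \<Rightarrow> complex^'n^'m"
  assumes inf: "inf_diff_seq (\<lambda>x. v (x,0) $ i $ j) fd" and X: "XC K E v" and E: "0 < E"
  shows "k \<le> K \<Longrightarrow> x \<in> {0..<E} \<Longrightarrow> fd k x = (pdx ^^ k) v (x,0) $ i $ j"
proof (induction k arbitrary: x)
  case 0 then show ?case using inf unfolding inf_diff_seq_def by auto
next
  case (Suc k)
  have x: "0 \<le> x" "x < E" using Suc by auto
  have "\<forall>k. \<forall>x\<ge>0. (fd k has_vector_derivative fd (Suc k) x) (at x within {0..})"
    using inf unfolding inf_diff_seq_def by (elim conjE)
  then have d0: "(fd k has_vector_derivative fd (Suc k) x) (at x within {0..})" using x(1) by blast
  have d1: "(fd k has_vector_derivative fd (Suc k) x) (at x within {0..<E})"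
    using d0 unfolding at_eq_half[OF x] .
  have d1': "((\<lambda>y. (pdx ^^ k) v (y,0) $ i $ j) has_vector_derivative fd (Suc k) x) (at x within {0..<E})"
  proof (rule has_vector_derivative_transform[OF _ _ d1])
    show "x \<in> {0..<E}" using x by simp
    fix y assume y: "y \<in> {0..<E}"
    have "k \<le> K" using Suc.prems by simp
    then show "(pdx ^^ k) v (y, 0) $ i $ j = fd k y" using Suc.IH[OF _ y] by simp
  qed
  have "(x,0) \<in> QQ E" using x E by (auto simp: QQ_def)
  moreover have "k < K" using Suc by simp
  ultimately have "has_pdx ((pdx ^^ k) v) (x,0) ((pdx ^^ Suc k) v (x,0))" using X unfolding XC_def by blast
  then have "((\<lambda>y. (pdx ^^ k) v (y,0)) has_vector_derivative (pdx ^^ Suc k) v (x,0)) (at x within {0..<E})"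
    unfolding has_pdx_def fst_conv snd_conv at_eq_half[OF x] .
  then have d2: "((\<lambda>y. (pdx ^^ k) v (y,0) $ i $ j) has_vector_derivative (pdx ^^ Suc k) v (x,0) $ i $ j) (at x within {0..<E})"
    by (rule bounded_linear.has_vector_derivative[OF bl_entry])
  show ?case by (rule vector_derivative_unique_within[OF nbot_Ico[OF E] d1' d2]) (use x in auto)
qed

lemma part3:
  fixes v w :: "real \<times> real \<Rightarrow> complex^'n^'m"
  assumes Cqv: "Cq a M v" and Cqw: "Cq a M w"
    and agree0: "\<And>k. (pdx ^^ k) w (0,0) = (pdx ^^ k) v (0,0)"
  shows "\<forall>x\<ge>0. w (x, 0) = v (x, 0)"
proof (intro allI impI)
  fix x :: real assume x: "0 \<le> x"
  have "w (x,0) $ i $ j = v (x,0) $ i $ j" for i j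
  proof -
    have Mpos: "\<forall>k. M i j k > 0" and qa: "quasi_analytic (M i j)" 
      and fv: "(\<lambda>x. v (x, 0) $ i $ j) \<in> DClass (M i j)"
      using Cq_parts(2)[OF Cqv] by blast+
    have fw: "(\<lambda>x. w (x, 0) $ i $ j) \<in> DClass (M i j)"
      using Cq_parts(2)[OF Cqw] by blast
    obtain fdv Av where iv: "inf_diff_seq (\<lambda>x. v (x, 0) $ i $ j) fdv" and Av: "Av \<ge> 0"
      and bv: "\<forall>k. \<forall>x\<ge>0. norm (fdv k x) \<le> Av ^ Suc k * M i j k"
      using fv unfolding DClass_def by blast
    obtain fdw Aw where iw: "inf_diff_seq (\<lambda>x. w (x, 0) $ i $ j) fdw" and Aw: "Aw \<ge> 0"
      and bw: "\<forall>k. \<forall>x\<ge>0. norm (fdw k x) \<le> Aw ^ Suc k * M i j k"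
      using fw unfolding DClass_def by blast
    define h where "h = (\<lambda>x. w (x, 0) $ i $ j - v (x, 0) $ i $ j)"
    define fdh where "fdh = (\<lambda>k x. fdw k x - fdv k x)"
    have ih: "inf_diff_seq h fdh"
      using iv iw unfolding inf_diff_seq_def h_def fdh_def 
      by (auto intro!: has_vector_derivative_diff)
    define C where "C = 2 * max Av Aw"
    have C0: "C \<ge> 0" using Av by (simp add: C_def)
    have bh: "norm (fdh k y) \<le> C ^ Suc k * M i j k" if "y \<ge> 0" for k y
    proof -
      define D where "D = max Av Aw"
      have D0: "D \<ge> 0" using Av by (simp add: D_def)
      have M0: "M i j k \<ge> 0" using Mpos by (simp add: less_imp_le)
      have "norm (fdh k y) \<le> norm (fdw k y) + norm (fdv k y)" unfolding fdh_def by (rule norm_triangle_ineq4)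
      also have "\<dots> \<le> Aw ^ Suc k * M i j k + Av ^ Suc k * M i j k" using bv bw that by (intro add_mono) auto
      also have "\<dots> \<le> D ^ Suc k * M i j k + D ^ Suc k * M i j k"
        by (intro add_mono mult_right_mono power_mono M0) (use Av Aw in \<open>auto simp: D_def\<close>)
      also have "\<dots> = 2 * (D ^ Suc k * M i j k)" by simp
      also have "\<dots> \<le> 2 ^ Suc k * (D ^ Suc k * M i j k)"
      proof (rule mult_right_mono)
        have "(1::real) \<le> 2 ^ k" by (rule one_le_power) simp
        then show "(2::real) \<le> 2 ^ Suc k" by simp
        show "0 \<le> D ^ Suc k * M i j k" using D0 M0 by simp
      qed
      also have "\<dots> = C ^ Suc k * M i j k" unfolding C_def D_def by (simp add: power_mult_distrib)
      finally show ?thesis .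
    qed
    have hD: "h \<in> DClass (M i j)" unfolding DClass_def using ih C0 bh by blast
    have z: "fdh k 0 = 0" for k
    proof -
      obtain Ev where Ev: "Ev > 0" "XC k Ev v" using Cq_XC[OF Cqv] by blast
      obtain Ew where Ew: "Ew > 0" "XC k Ew w" using Cq_XC[OF Cqw] by blast
      define E where "E = min Ev Ew"
      have E: "E > 0" using Ev Ew by (simp add: E_def)
      have Xv: "XC k E v" by (rule XC_Emono[OF Ev(2)]) (simp add: E_def)
      have Xw: "XC k E w" by (rule XC_Emono[OF Ew(2)]) (simp add: E_def)
      have "fdv k 0 = (pdx ^^ k) v (0,0) $ i $ j" by (rule fd_lemma[OF iv Xv E]) (use E in auto)
      moreover have "fdw k 0 = (pdx ^^ k) w (0,0) $ i $ j" by (rule fd_lemma[OF iw Xw E]) (use E in auto)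
      ultimately show ?thesis unfolding fdh_def using agree0[of k] by simp
    qed
    have q1: "\<forall>x0\<ge>0. (\<forall>k. fdh k x0 = 0) \<longrightarrow> (\<forall>x\<ge>0. h x = 0)"
      using qa hD ih unfolding quasi_analytic_def by blast
    have "\<forall>x\<ge>0. h x = 0" using q1[rule_format, of 0] z by simp
    then show ?thesis using x unfolding h_def by auto
  qed
  then show "w (x, 0) = v (x, 0)" by (simp add: vec_eq_iff)
qed


theorem mainTheorem5:
  fixes a :: ereal and M :: "'m::finite \<Rightarrow> 'n::finite \<Rightarrow> nat \<Rightarrow> real"
    and v :: "real \<times> real \<Rightarrow> complex ^ 'n ^ 'm"
  assumes "0 < a"
    and "Cq a M v"
    and "solves_NLS a v"
  shows "(\<forall>r. \<exists>e>0. ereal e < a \<and> (\<forall>k\<le>r. \<forall>p\<in>square e.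
            (\<forall>q\<in>square e. has_pdx ((pdx ^^ k) v) q (pdx ((pdx ^^ k) v) q)
                           \<and> has_pdt a ((pdx ^^ k) v) q (pdt a ((pdx ^^ k) v) q)) \<and>
            (\<exists>L. ((\<lambda>s. pdx ((pdx ^^ k) v) (fst p, s)) has_vector_derivative L)
                      (at (snd p) within {0..e}) \<and>
                 ((\<lambda>y. pdt a ((pdx ^^ k) v) (y, snd p)) has_vector_derivative L)
                      (at (fst p) within {0..e}))))
       \<and> (\<forall>w :: real \<times> real \<Rightarrow> complex ^ 'n ^ 'm.
            Cq a M w \<and> solves_NLS a w \<and>
            (\<forall>t. 0 \<le> t \<and> ereal t < a \<longrightarrow> w (0, t) = v (0, t) \<and> pdx w (0, t) = pdx v (0, t))
            \<longrightarrow> (\<forall>k. \<exists>e>0. ereal e < a \<and>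
                     (\<forall>t\<in>{0..e}. (pdx ^^ k) w (0, t) = (pdx ^^ k) v (0, t)))
              \<and> (\<forall>x\<ge>0. w (x, 0) = v (x, 0)))"
proof -
  have P1: "\<forall>r. \<exists>e>0. ereal e < a \<and> (\<forall>k\<le>r. \<forall>p\<in>square e.
            (\<forall>q\<in>square e. has_pdx ((pdx ^^ k) v) q (pdx ((pdx ^^ k) v) q)
                           \<and> has_pdt a ((pdx ^^ k) v) q (pdt a ((pdx ^^ k) v) q)) \<and>
            (\<exists>L. ((\<lambda>s. pdx ((pdx ^^ k) v) (fst p, s)) has_vector_derivative L)
                      (at (snd p) within {0..e}) \<and>
                 ((\<lambda>y. pdt a ((pdx ^^ k) v) (y, snd p)) has_vector_derivative L)
                      (at (fst p) within {0..e})))"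
    using part1[OF assms(2) assms(3)] by blast
  have P2: "\<forall>w :: real \<times> real \<Rightarrow> complex ^ 'n ^ 'm.
            Cq a M w \<and> solves_NLS a w \<and>
            (\<forall>t. 0 \<le> t \<and> ereal t < a \<longrightarrow> w (0, t) = v (0, t) \<and> pdx w (0, t) = pdx v (0, t))
            \<longrightarrow> (\<forall>k. \<exists>e>0. ereal e < a \<and>
                     (\<forall>t\<in>{0..e}. (pdx ^^ k) w (0, t) = (pdx ^^ k) v (0, t)))
              \<and> (\<forall>x\<ge>0. w (x, 0) = v (x, 0))"
  proof (intro allI impI)
    fix w :: "real \<times> real \<Rightarrow> complex ^ 'n ^ 'm"
    assume H: "Cq a M w \<and> solves_NLS a w \<and>
            (\<forall>t. 0 \<le> t \<and> ereal t < a \<longrightarrow> w (0, t) = v (0, t) \<and> pdx w (0, t) = pdx v (0, t))"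
    have Cqw: "Cq a M w" and Nw: "solves_NLS a w" 
      and bd: "\<forall>t. 0 \<le> t \<and> ereal t < a \<longrightarrow> w (0, t) = v (0, t) \<and> pdx w (0, t) = pdx v (0, t)"
      using H by blast+
    have U: "\<exists>e>0. ereal e < a \<and> (\<forall>t\<in>{0..e}. (pdx ^^ k) w (0, t) = (pdx ^^ k) v (0, t))" for k
      by (rule part2[OF assms(2) assms(3) Cqw Nw bd])
    have agree0: "(pdx ^^ k) w (0,0) = (pdx ^^ k) v (0,0)" for k
    proof -
      obtain e where "e > 0" "\<forall>t\<in>{0..e}. (pdx ^^ k) w (0, t) = (pdx ^^ k) v (0, t)" using U[of k] by blast
      then show ?thesis by auto
    qed
    have "\<forall>x\<ge>0. w (x, 0) = v (x, 0)" by (rule part3[OF assms(2) Cqw agree0])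
    then show "(\<forall>k. \<exists>e>0. ereal e < a \<and>
                     (\<forall>t\<in>{0..e}. (pdx ^^ k) w (0, t) = (pdx ^^ k) v (0, t)))
              \<and> (\<forall>x\<ge>0. w (x, 0) = v (x, 0))" using U by blast
  qed
  show ?thesis by (rule conjI[OF P1 P2])
qed

end
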